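(* If a set $S$ of sentences has a model, then there exists an alphabet that includes the original alphabet and an interpretation based on the expanded alphabet which is a separating model for $S$ (with respect to the expanded alphabet).
   Context: Setting: higher-order logic (Church's simple theory of types, without a description operator), with Henkin semantics: an interpretation $I$ for an alphabet consists of domains $D_\alpha$ for each type ($D_o=\{\mathsf T,\mathsf F\}$, $D_{\alpha\to\beta}$ a set of functions $D_\alpha\to D_\beta$) and a valuation of the constants of the alphabet (equality denoting identity) such that every term has a denotation; $V(t,I)$ is the denotation of a closed term $t$. Sentences are closed terms of type $o$; a model for a set of sentences is an interpretation in which each of them is true. An interpretation $I$ for an alphabet is separating if for every pair $r,s$ of closed terms of the same function type $\alpha\to\beta$ with $V(r,I)\neq V(s,I)$ there is a closed term $t$ of type $\alpha$ formed from symbols of that alphabet with $V((r\,t),I)\neq V((s\,t),I)$; a separating model is a separating interpretation that is a model. *)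

theory Defs
  imports Main
begin

datatype ty = TO | TI | TFun ty ty

text \<open>A constant symbol of the alphabet is a
  pair (name, type). Equality Eq a (at type a -> a -> o) is a logical constant
  available at every type. Variables are (index, type); Abs x a t binds Var x a.\<close>
datatype 'c trm =
    Var nat ty
  | Const 'c ty
  | Eq ty
  | App "'c trm" "'c trm"
  | Abs nat ty "'c trm"

fun typ_of :: "'c trm \<Rightarrow> ty option" where
  "typ_of (Var x a) = Some a"
| "typ_of (Const c a) = Some a"
| "typ_of (Eq a) = Some (TFun a (TFun a TO))"
| "typ_of (App s t) =
     (case (typ_of s, typ_of t) of
        (Some (TFun a b), Some a') \<Rightarrow> (if a = a' then Some b else None)
      | _ \<Rightarrow> None)"
| "typ_of (Abs x a t) = map_option (TFun a) (typ_of t)"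

fun fvs :: "'c trm \<Rightarrow> (nat \<times> ty) set" where
  "fvs (Var x a) = {(x, a)}"
| "fvs (Const c a) = {}"
| "fvs (Eq a) = {}"
| "fvs (App s t) = fvs s \<union> fvs t"
| "fvs (Abs x a t) = fvs t - {(x, a)}"

fun consts_of :: "'c trm \<Rightarrow> ('c \<times> ty) set" where
  "consts_of (Var x a) = {}"
| "consts_of (Const c a) = {(c, a)}"
| "consts_of (Eq a) = {}"
| "consts_of (App s t) = consts_of s \<union> consts_of t"
| "consts_of (Abs x a t) = consts_of t"

definition term_of :: "('c \<times> ty) set \<Rightarrow> 'c trm \<Rightarrow> ty \<Rightarrow> bool" where
  "term_of A t a \<longleftrightarrow> consts_of t \<subseteq> A \<and> typ_of t = Some a"

definition closed_term_of :: "('c \<times> ty) set \<Rightarrow> 'c trm \<Rightarrow> ty \<Rightarrow> bool" where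
  "closed_term_of A t a \<longleftrightarrow> term_of A t a \<and> fvs t = {}"

definition sentence :: "('c \<times> ty) set \<Rightarrow> 'c trm \<Rightarrow> bool" where
  "sentence A t \<longleftrightarrow> closed_term_of A t TO"

text \<open>An element f of D (TFun a b) is read as the function
  x \<mapsto> app f x from D a to D b; extensionality (below) makes D (TFun a b) correspond
  exactly to a set of functions D a \<rightarrow> D b.\<close>
record ('u, 'c) interp =
  D :: "ty \<Rightarrow> 'u set"
  app :: "'u \<Rightarrow> 'u \<Rightarrow> 'u"
  tt :: 'u
  ff :: 'u
  cval :: "'c \<Rightarrow> ty \<Rightarrow> 'u"

fun eval :: "('u, 'c) interp \<Rightarrow> (nat \<Rightarrow> ty \<Rightarrow> 'u) \<Rightarrow> 'c trm \<Rightarrow> 'u" where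
  "eval I \<phi> (Var x a) = \<phi> x a"
| "eval I \<phi> (Const c a) = cval I c a"
| "eval I \<phi> (Eq a) =
     (SOME q. q \<in> D I (TFun a (TFun a TO)) \<and>
        (\<forall>x\<in>D I a. \<forall>y\<in>D I a. app I (app I q x) y = (if x = y then tt I else ff I)))"
| "eval I \<phi> (App s t) = app I (eval I \<phi> s) (eval I \<phi> t)"
| "eval I \<phi> (Abs x a t) =
     (SOME f. f \<in> D I (TFun a (the (typ_of t))) \<and>
        (\<forall>d\<in>D I a. app I f d = eval I (\<phi>(x := (\<phi> x)(a := d))) t))"

definition assignment :: "('u, 'c) interp \<Rightarrow> (nat \<Rightarrow> ty \<Rightarrow> 'u) \<Rightarrow> bool" where
  "assignment I \<phi> \<longleftrightarrow> (\<forall>x a. \<phi> x a \<in> D I a)"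

definition is_interp :: "('c \<times> ty) set \<Rightarrow> ('u, 'c) interp \<Rightarrow> bool" where
  "is_interp A I \<longleftrightarrow>
     D I TO = {tt I, ff I} \<and> tt I \<noteq> ff I \<and>
     (\<forall>a. D I a \<noteq> {}) \<and>
     (\<forall>a b f x. f \<in> D I (TFun a b) \<longrightarrow> x \<in> D I a \<longrightarrow> app I f x \<in> D I b) \<and>
     (\<forall>a b f g. f \<in> D I (TFun a b) \<longrightarrow> g \<in> D I (TFun a b) \<longrightarrow>
                (\<forall>x\<in>D I a. app I f x = app I g x) \<longrightarrow> f = g) \<and>
     (\<forall>(c, a)\<in>A. cval I c a \<in> D I a) \<and>
     (\<forall>a. \<exists>q\<in>D I (TFun a (TFun a TO)).
            \<forall>x\<in>D I a. \<forall>y\<in>D I a. app I (app I q x) y = (if x = y then tt I else ff I)) \<and>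
     (\<forall>x a t b \<phi>. term_of A t b \<longrightarrow> assignment I \<phi> \<longrightarrow>
        (\<exists>f\<in>D I (TFun a b). \<forall>d\<in>D I a. app I f d = eval I (\<phi>(x := (\<phi> x)(a := d))) t))"

text \<open>Denotation V(t, I) of a closed term (independent of the assignment).\<close>
definition V :: "'c trm \<Rightarrow> ('u, 'c) interp \<Rightarrow> 'u" where
  "V t I = eval I (\<lambda>x a. SOME d. d \<in> D I a) t"

definition is_model :: "('c \<times> ty) set \<Rightarrow> ('u, 'c) interp \<Rightarrow> 'c trm set \<Rightarrow> bool" where
  "is_model A I S \<longleftrightarrow> is_interp A I \<and> (\<forall>s\<in>S. V s I = tt I)"

definition separating :: "('c \<times> ty) set \<Rightarrow> ('u, 'c) interp \<Rightarrow> bool" where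
  "separating A I \<longleftrightarrow> is_interp A I \<and>
     (\<forall>r s a b. closed_term_of A r (TFun a b) \<longrightarrow> closed_term_of A s (TFun a b) \<longrightarrow>
        V r I \<noteq> V s I \<longrightarrow>
        (\<exists>t. closed_term_of A t a \<and> V (App r t) I \<noteq> V (App s t) I))"

definition separating_model :: "('c \<times> ty) set \<Rightarrow> ('u, 'c) interp \<Rightarrow> 'c trm set \<Rightarrow> bool" where
  "separating_model A I S \<longleftrightarrow> separating A I \<and> is_model A I S"

end

theory Submission
  imports Defs
begin

fun trans :: "('u \<times> ty \<Rightarrow> nat) \<Rightarrow> ('c + 'u) trm \<Rightarrow> 'c trm" where
  "trans \<nu> (Var x a) = Var x a"
| "trans \<nu> (Const c a) = (case c of Inl c' \<Rightarrow> Const c' a | Inr u \<Rightarrow> Var (\<nu> (u, a)) a)"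
| "trans \<nu> (Eq a) = Eq a"
| "trans \<nu> (App s t) = App (trans \<nu> s) (trans \<nu> t)"
| "trans \<nu> (Abs x a t) = Abs x a (trans \<nu> t)"

fun allv :: "'c trm \<Rightarrow> nat set" where
  "allv (Var x a) = {x}"
| "allv (Const c a) = {}"
| "allv (Eq a) = {}"
| "allv (App s t) = allv s \<union> allv t"
| "allv (Abs x a t) = insert x (allv t)"

lemma finite_allv: "finite (allv t)"
  by (induction t) auto

lemma finite_consts: "finite (consts_of t)"
  by (induction t) auto

lemma typ_trans: "typ_of (trans \<nu> t) = typ_of t"
  by (induction t) (auto split: sum.splits)

lemma consts_trans: "consts_of (trans \<nu> t) = {(c, a). (Inl c, a) \<in> consts_of t}"
  by (induction t) (auto split: sum.splits)

lemma trans_map: "trans \<nu> (map_trm Inl t) = t"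
  by (induction t) auto

lemma eval_trans:
  fixes J :: "('u, 'c + 'u) interp" and I :: "('u, 'c) interp"
  assumes J: "D J = D I" "app J = app I" "tt J = tt I" "ff J = ff I"
     "\<forall>c a. cval J (Inl c) a = cval I c a" "\<forall>u a. cval J (Inr u) a = u"
  shows "(\<forall>n c. n \<in> allv t \<longrightarrow> \<psi> n c = \<phi> n c) \<Longrightarrow>
    (\<forall>u b. (Inr u, b) \<in> consts_of t \<longrightarrow> \<psi> (\<nu> (u, b)) b = u \<and> \<nu> (u, b) \<notin> allv t) \<Longrightarrow>
    eval J \<phi> t = eval I \<psi> (trans \<nu> t)"
proof (induction t arbitrary: \<phi> \<psi>)
  case (Var x a) then show ?case by simp
next
  case (Const c a) then show ?case using J by (cases c) auto
next
  case (Eq a) then show ?case using J by simp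
next
  case (App s t)
  have "eval J \<phi> s = eval I \<psi> (trans \<nu> s)"
    by (rule App.IH(1)) (use App.prems in auto)
  moreover have "eval J \<phi> t = eval I \<psi> (trans \<nu> t)"
    by (rule App.IH(2)) (use App.prems in auto)
  ultimately show ?case using J by simp
next
  case (Abs x a t)
  have "\<forall>d. eval J (\<phi>(x := (\<phi> x)(a := d))) t = eval I (\<psi>(x := (\<psi> x)(a := d))) (trans \<nu> t)"
  proof
    fix d
    show "eval J (\<phi>(x := (\<phi> x)(a := d))) t = eval I (\<psi>(x := (\<psi> x)(a := d))) (trans \<nu> t)"
      apply (rule Abs.IH)
      using Abs.prems by auto
  qed
  then show ?case using J by (simp add: typ_trans)
qed

lemma consts_map: "consts_of (map_trm f t) = (\<lambda>(c, a). (f c, a)) ` consts_of t"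
  by (induction t) auto

lemma eval_trans0:
  fixes J :: "('u, 'c + 'u) interp" and I :: "('u, 'c) interp"
  assumes J: "D J = D I" "app J = app I" "tt J = tt I" "ff J = ff I"
     "\<forall>c a. cval J (Inl c) a = cval I c a" "\<forall>u a. cval J (Inr u) a = u"
  shows "eval J \<phi> (map_trm Inl t) = eval I \<phi> t"
proof -
  have "eval J \<phi> (map_trm Inl t) = eval I \<phi> (trans (\<lambda>_::'u \<times> ty. 0) (map_trm Inl t))"
    apply (rule eval_trans[OF J])
     apply simp
    apply (auto simp: consts_map)
    done
  then show ?thesis by (simp add: trans_map)
qed

lemma typ_app: "typ_of (App s t) = Some b \<Longrightarrow> \<exists>a. typ_of s = Some (TFun a b) \<and> typ_of t = Some a"
  by (auto split: option.splits ty.splits if_splits)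

lemma eval_in_D:
  assumes I: "is_interp A I"
  shows "term_of A t b \<Longrightarrow> assignment I \<phi> \<Longrightarrow> eval I \<phi> t \<in> D I b"
proof (induction t arbitrary: \<phi> b)
  case (Var x a) then show ?case by (auto simp: term_of_def assignment_def)
next
  case (Const c a) then show ?case using I by (auto simp: term_of_def is_interp_def)
next
  case (Eq a)
  have "\<forall>a. \<exists>q\<in>D I (TFun a (TFun a TO)).
            \<forall>x\<in>D I a. \<forall>y\<in>D I a. app I (app I q x) y = (if x = y then tt I else ff I)"
    using I unfolding is_interp_def by blast
  then obtain q where "q\<in>D I (TFun a (TFun a TO))"
    "\<forall>x\<in>D I a. \<forall>y\<in>D I a. app I (app I q x) y = (if x = y then tt I else ff I)"
    by blast
  then show ?case using Eq.prems
    by (simp add: term_of_def) (rule someI2[where a=q], auto)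
next
  case (App s t)
  from App.prems have "typ_of (App s t) = Some b" unfolding term_of_def by blast
  then obtain a where a: "typ_of s = Some (TFun a b)" "typ_of t = Some a"
    using typ_app by blast
  have "eval I \<phi> s \<in> D I (TFun a b)" using App a by (auto simp: term_of_def)
  moreover have "eval I \<phi> t \<in> D I a" using App a by (auto simp: term_of_def)
  ultimately show ?case using I by (simp add: is_interp_def)
next
  case (Abs x a t)
  from Abs.prems obtain b' where b': "typ_of t = Some b'" "b = TFun a b'" "term_of A t b'"
    by (auto simp: term_of_def)
  have "\<forall>x a t b \<phi>. term_of A t b \<longrightarrow> assignment I \<phi> \<longrightarrow>
        (\<exists>f\<in>D I (TFun a b). \<forall>d\<in>D I a. app I f d = eval I (\<phi>(x := (\<phi> x)(a := d))) t)"
    using I unfolding is_interp_def by blast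
  with b' Abs.prems obtain f where "f\<in>D I (TFun a b')"
    "\<forall>d\<in>D I a. app I f d = eval I (\<phi>(x := (\<phi> x)(a := d))) t"
    by blast
  then show ?case using b'
    by simp (rule someI2[where a=f], auto)
qed

theorem mainTheorem17:
  fixes A :: "('c \<times> ty) set" and S :: "'c trm set" and I :: "('u, 'c) interp"
  assumes "\<forall>s\<in>S. sentence A s"
    and "is_model A I S"
  shows "\<exists>(A' :: (('c + 'u) \<times> ty) set) (I' :: ('u, 'c + 'u) interp).
           (\<lambda>(c, a). (Inl c, a)) ` A \<subseteq> A' \<and>
           separating_model A' I' (map_trm Inl ` S)"
proof -
  have I: "is_interp A I" using assms(2) by (simp add: is_model_def)
  define A' :: "(('c + 'u) \<times> ty) set" where
    "A' = (\<lambda>(c, a). (Inl c, a)) ` A \<union> {(Inr u, a) | u a. u \<in> D I a}"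
  define J :: "('u, 'c + 'u) interp" where
    "J = \<lparr>D = D I, app = app I, tt = tt I, ff = ff I,
         cval = \<lambda>c a. case c of Inl c' \<Rightarrow> cval I c' a | Inr u \<Rightarrow> u\<rparr>"
  have J: "D J = D I" "app J = app I" "tt J = tt I" "ff J = ff I"
     "\<forall>c a. cval J (Inl c) a = cval I c a" "\<forall>u a. cval J (Inr u) a = u"
    by (auto simp: J_def)
  have A'Inr: "u \<in> D I c" if "(Inr u, c) \<in> A'" for u c
    using that by (auto simp: A'_def)
  have A'Inl: "(k, c) \<in> A" if "(Inl k, c) \<in> A'" for k c
    using that by (auto simp: A'_def)
  have comp: "\<exists>f\<in>D J (TFun a b). \<forall>d\<in>D J a. app J f d = eval J (\<phi>(x := (\<phi> x)(a := d))) t"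
    if tA: "term_of A' t b" and asg: "assignment J \<phi>" for x a t b \<phi>
  proof -
    define F where "F = {(u, c). (Inr u, c) \<in> consts_of t}"
    have "F \<subseteq> (\<lambda>(k, c). (projr k, c)) ` consts_of t"
      unfolding F_def by force
    then have "finite F" using finite_consts finite_subset by blast
    then obtain g :: "'u \<times> ty \<Rightarrow> nat" where g: "inj_on g F"
      using finite_imp_inj_to_nat_seg by blast
    define N where "N = Suc (Max (insert x (allv t)))"
    have Nlt: "n < N" if "n \<in> insert x (allv t)" for n
    proof -
      have "n \<le> Max (insert x (allv t))" using that finite_allv by (intro Max_ge) auto
      then show ?thesis unfolding N_def by simp
    qed
    define \<nu> where "\<nu> p = N + g p" for p
    define \<psi> where "\<psi> n c = (if \<exists>u. (u, c) \<in> F \<and> \<nu> (u, c) = n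
        then (SOME u. (u, c) \<in> F \<and> \<nu> (u, c) = n) else \<phi> n c)" for n c
    have psiF: "\<psi> (\<nu> (u, c)) c = u" if "(u, c) \<in> F" for u c
    proof -
      have "(SOME u'. (u', c) \<in> F \<and> \<nu> (u', c) = \<nu> (u, c)) = u"
        apply (rule some_equality)
        using that g unfolding \<nu>_def inj_on_def by auto
      then show ?thesis unfolding \<psi>_def using that by auto
    qed
    have psiA: "\<psi> n c = \<phi> n c" if "n \<in> insert x (allv t)" for n c
      using Nlt[OF that] unfolding \<psi>_def \<nu>_def by auto
    have asgI: "assignment I \<psi>"
      unfolding assignment_def
    proof (intro allI)
      fix n c
      show "\<psi> n c \<in> D I c"
      proof (cases "\<exists>u. (u, c) \<in> F \<and> \<nu> (u, c) = n")
        case True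
        then have "(SOME u. (u, c) \<in> F \<and> \<nu> (u, c) = n, c) \<in> F"
          by (metis (mono_tags, lifting) someI_ex)
        then have "(Inr (SOME u. (u, c) \<in> F \<and> \<nu> (u, c) = n), c) \<in> A'"
          using tA unfolding F_def term_of_def by auto
        then show ?thesis using True A'Inr unfolding \<psi>_def by simp
      next
        case False
        then have "\<psi> n c = \<phi> n c" unfolding \<psi>_def by auto
        then show ?thesis using asg J unfolding assignment_def by simp
      qed
    qed
    have tI: "term_of A (trans \<nu> t) b"
      using tA A'Inl unfolding term_of_def by (auto simp: consts_trans typ_trans)
    have "\<forall>x a t b \<phi>. term_of A t b \<longrightarrow> assignment I \<phi> \<longrightarrow>
        (\<exists>f\<in>D I (TFun a b). \<forall>d\<in>D I a. app I f d = eval I (\<phi>(x := (\<phi> x)(a := d))) t)"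
      using I unfolding is_interp_def by blast
    with tI asgI obtain f where f: "f \<in> D I (TFun a b)"
      "\<forall>d\<in>D I a. app I f d = eval I (\<psi>(x := (\<psi> x)(a := d))) (trans \<nu> t)"
      by blast
    have "eval J (\<phi>(x := (\<phi> x)(a := d))) t = eval I (\<psi>(x := (\<psi> x)(a := d))) (trans \<nu> t)" for d
    proof (rule eval_trans[OF J])
      show "\<forall>n c. n \<in> allv t \<longrightarrow> (\<psi>(x := (\<psi> x)(a := d))) n c = (\<phi>(x := (\<phi> x)(a := d))) n c"
        using psiA by auto
      show "\<forall>u b. (Inr u, b) \<in> consts_of t \<longrightarrow>
          (\<psi>(x := (\<psi> x)(a := d))) (\<nu> (u, b)) b = u \<and> \<nu> (u, b) \<notin> allv t"
      proof (intro allI impI)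
        fix u c assume "(Inr u, c) \<in> consts_of t"
        then have uF: "(u, c) \<in> F" unfolding F_def by simp
        have "\<nu> (u, c) \<noteq> x" "\<nu> (u, c) \<notin> allv t"
          using Nlt[of x] Nlt[of "\<nu> (u, c)"] unfolding \<nu>_def by auto
        then show "(\<psi>(x := (\<psi> x)(a := d))) (\<nu> (u, c)) c = u \<and> \<nu> (u, c) \<notin> allv t"
          using psiF[OF uF] by simp
      qed
    qed
    then show ?thesis using f J by auto
  qed
  have JI: "is_interp A' J"
    unfolding is_interp_def
  proof (intro conjI)
    show "D J TO = {tt J, ff J}" "tt J \<noteq> ff J" "\<forall>a. D J a \<noteq> {}"
      "\<forall>a b f x. f \<in> D J (TFun a b) \<longrightarrow> x \<in> D J a \<longrightarrow> app J f x \<in> D J b"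
      "\<forall>a b f g. f \<in> D J (TFun a b) \<longrightarrow> g \<in> D J (TFun a b) \<longrightarrow>
                (\<forall>x\<in>D J a. app J f x = app J g x) \<longrightarrow> f = g"
      using I unfolding J(1-4) is_interp_def by auto
    show "\<forall>(c, a)\<in>A'. cval J c a \<in> D J a"
      using I unfolding is_interp_def by (auto simp: A'_def J_def)
    show "\<forall>a. \<exists>q\<in>D J (TFun a (TFun a TO)).
            \<forall>x\<in>D J a. \<forall>y\<in>D J a. app J (app J q x) y = (if x = y then tt J else ff J)"
      using I unfolding J(1-4) is_interp_def by blast
    show "\<forall>x a t b \<phi>. term_of A' t b \<longrightarrow> assignment J \<phi> \<longrightarrow>
        (\<exists>f\<in>D J (TFun a b). \<forall>d\<in>D J a. app J f d = eval J (\<phi>(x := (\<phi> x)(a := d))) t)"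
      using comp by blast
  qed
  define \<phi>0 where "\<phi>0 = (\<lambda>(x::nat) a. SOME d. d \<in> D J a)"
  have asg0: "assignment J \<phi>0"
    using JI unfolding assignment_def \<phi>0_def is_interp_def by (simp add: ex_in_conv[symmetric] some_in_eq)
  have sep: "separating A' J"
    unfolding separating_def
  proof (intro conjI JI allI impI)
    fix r s a b
    assume r: "closed_term_of A' r (TFun a b)" and s: "closed_term_of A' s (TFun a b)"
      and ne: "V r J \<noteq> V s J"
    have "V r J \<in> D J (TFun a b)" "V s J \<in> D J (TFun a b)"
      using eval_in_D[OF JI] r s asg0 unfolding V_def \<phi>0_def closed_term_of_def by auto
    with ne JI obtain x where x: "x \<in> D J a" "app J (V r J) x \<noteq> app J (V s J) x"
      unfolding is_interp_def by meson
    have "closed_term_of A' (Const (Inr x) a) a"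
      using x J unfolding closed_term_of_def term_of_def A'_def by auto
    moreover have "V (App r (Const (Inr x) a)) J \<noteq> V (App s (Const (Inr x) a)) J"
      using x J unfolding V_def by simp
    ultimately show "\<exists>t. closed_term_of A' t a \<and> V (App r t) J \<noteq> V (App s t) J" by blast
  qed
  have mod: "is_model A' J (map_trm Inl ` S)"
    unfolding is_model_def
  proof (intro conjI JI ballI)
    fix s' :: "('c + 'u) trm" assume "s' \<in> map_trm Inl ` S"
    then obtain s where s: "s \<in> S" "s' = map_trm Inl s" by blast
    have "V s' J = V s I"
      unfolding V_def s(2) eval_trans0[OF J] J(1) ..
    then show "V s' J = tt J" using assms(2) s(1) J by (simp add: is_model_def)
  qed
  show ?thesis
    apply (rule exI[of _ A'], rule exI[of _ J])
    using sep mod by (auto simp: A'_def separating_model_def)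
qed

end
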